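(* Let $z_\alpha,z_\beta$ be the upper $\alpha$ and $\beta$ quantiles of the standard normal distribution, with $0<\alpha,\beta<1/2$. Let $\theta=(p_1^{(0)},p_2^{(0)})$ with $0<p_k^{(0)}<1/2$, and $\lambda=(\delta_1,\delta_2)$ with $\delta_k<0$ and $p_k^{(0)}+\delta_k>0$ ($k=1,2$); write $q_k^{(0)}=1-p_k^{(0)}$. For a correlation value $\rho$ define $$p_*^{(0)}(\theta,\rho)=1-q_1^{(0)}q_2^{(0)}-\rho\sqrt{p_1^{(0)}p_2^{(0)}q_1^{(0)}q_2^{(0)}},$$ $$\delta_*(\theta,\lambda,\rho)=\delta_1q_2^{(0)}+\delta_2q_1^{(0)}-\delta_1\delta_2+\rho\sqrt{p_1^{(0)}p_2^{(0)}q_1^{(0)}q_2^{(0)}}-\rho\sqrt{(p_1^{(0)}+\delta_1)(p_2^{(0)}+\delta_2)(q_1^{(0)}-\delta_1)(q_2^{(0)}-\delta_2)},$$ and $$n(\theta,\lambda,\rho)=\frac{2(z_\alpha+z_\beta)^2\Big(p_*^{(0)}(1-p_*^{(0)})+(p_*^{(0)}+\delta_* )(1-p_*^{(0)}-\delta_* )\Big)}{\delta_*^2},$$ where $p_*^{(0)}=p_*^{(0)}(\theta,\rho)$, $\delta_*=\delta_*(\theta,\lambda,\rho)$. Then, for fixed $\theta$ and $\lambda$, $n(\theta,\lambda,\rho)$ is an increasing function of $\rho$ on the interval of admissible correlation values $\rho\in[B_L(\theta,\lambda),B_U(\theta,\lambda)]$, where $$B_L=\max\left\{-\sqrt{\tfrac{p_1^{(0)}p_2^{(0)}}{q_1^{(0)}q_2^{(0)}}},\,-\sqrt{\tfrac{q_1^{(0)}q_2^{(0)}}{p_1^{(0)}p_2^{(0)}}},\,-\sqrt{\tfrac{(p_1^{(0)}+\delta_1)(p_2^{(0)}+\delta_2)}{(q_1^{(0)}-\delta_1)(q_2^{(0)}-\delta_2)}},\,-\sqrt{\tfrac{(q_1^{(0)}-\delta_1)(q_2^{(0)}-\delta_2)}{(p_1^{(0)}+\delta_1)(p_2^{(0)}+\delta_2)}}\right\},$$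 $$B_U=\min\left\{\sqrt{\tfrac{p_1^{(0)}q_2^{(0)}}{p_2^{(0)}q_1^{(0)}}},\,\sqrt{\tfrac{p_2^{(0)}q_1^{(0)}}{p_1^{(0)}q_2^{(0)}}},\,\sqrt{\tfrac{(p_1^{(0)}+\delta_1)(q_2^{(0)}-\delta_2)}{(p_2^{(0)}+\delta_2)(q_1^{(0)}-\delta_1)}},\,\sqrt{\tfrac{(p_2^{(0)}+\delta_2)(q_1^{(0)}-\delta_1)}{(p_1^{(0)}+\delta_1)(q_2^{(0)}-\delta_2)}}\right\}.$$ In particular $n(\theta,\lambda,B_L)\le n(\theta,\lambda,\rho)\le n(\theta,\lambda,B_U)$ for all admissible $\rho$.
   Context: Setting: two-arm balanced trial (control group 0, treatment group 1) whose primary endpoint is a composite binary endpoint, defined as the occurrence of at least one of two binary events. $p_k^{(0)}$ are the control-group event rates of the components, $p_k^{(0)}+\delta_k$ the treatment-group rates, and $\rho$ is the Pearson correlation between the two component indicators, assumed equal in both groups; $B_L,B_U$ are the bounds within which such a common correlation is attainable in both groups. $p_*^{(0)}(\theta,\rho)$ is the composite event probability in the control group, $\delta_*(\theta,\lambda,\rho)$ the composite risk difference, and $n(\theta,\lambda,\rho)$ the total sample size for a one-sided test of $H_0:\delta_*=0$ vs $H_1:\delta_*<0$ at level $\alpha$ with power $1-\beta$ using the unpooled variance estimate. *)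

theory Defs
  imports "HOL-Probability.Probability"
begin

definition std_normal :: "real measure" where
  "std_normal = density lborel std_normal_density"

definition is_upper_quantile :: "real \<Rightarrow> real \<Rightarrow> bool" where
  "is_upper_quantile a z \<longleftrightarrow> measure std_normal {z<..} = a"

definition p_star0 :: "real \<times> real \<Rightarrow> real \<Rightarrow> real" where
  "p_star0 \<theta> \<rho> = (case \<theta> of (p1, p2) \<Rightarrow>
     1 - (1 - p1) * (1 - p2) - \<rho> * sqrt (p1 * p2 * (1 - p1) * (1 - p2)))"

definition delta_star :: "real \<times> real \<Rightarrow> real \<times> real \<Rightarrow> real \<Rightarrow> real" where
  "delta_star \<theta> lam \<rho> = (case \<theta> of (p1, p2) \<Rightarrow> (case lam of (d1, d2) \<Rightarrow>
     d1 * (1 - p2) + d2 * (1 - p1) - d1 * d2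
     + \<rho> * sqrt (p1 * p2 * (1 - p1) * (1 - p2))
     - \<rho> * sqrt ((p1 + d1) * (p2 + d2) * ((1 - p1) - d1) * ((1 - p2) - d2))))"

definition sample_size :: "real \<Rightarrow> real \<Rightarrow> real \<times> real \<Rightarrow> real \<times> real \<Rightarrow> real \<Rightarrow> real" where
  "sample_size za zb \<theta> lam \<rho> =
     (let ps = p_star0 \<theta> \<rho>; ds = delta_star \<theta> lam \<rho> in
      2 * (za + zb)\<^sup>2 * (ps * (1 - ps) + (ps + ds) * (1 - ps - ds)) / ds\<^sup>2)"

definition B_L :: "real \<times> real \<Rightarrow> real \<times> real \<Rightarrow> real" where
  "B_L \<theta> lam = (case \<theta> of (p1, p2) \<Rightarrow> (case lam of (d1, d2) \<Rightarrow>
     let q1 = 1 - p1; q2 = 1 - p2 in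
     Max {- sqrt ((p1 * p2) / (q1 * q2)), - sqrt ((q1 * q2) / (p1 * p2)),
          - sqrt (((p1 + d1) * (p2 + d2)) / ((q1 - d1) * (q2 - d2))),
          - sqrt (((q1 - d1) * (q2 - d2)) / ((p1 + d1) * (p2 + d2)))}))"

definition B_U :: "real \<times> real \<Rightarrow> real \<times> real \<Rightarrow> real" where
  "B_U \<theta> lam = (case \<theta> of (p1, p2) \<Rightarrow> (case lam of (d1, d2) \<Rightarrow>
     let q1 = 1 - p1; q2 = 1 - p2 in
     Min {sqrt ((p1 * q2) / (p2 * q1)), sqrt ((p2 * q1) / (p1 * q2)),
          sqrt (((p1 + d1) * (q2 - d2)) / ((p2 + d2) * (q1 - d1))),
          sqrt (((p2 + d2) * (q1 - d1)) / ((p1 + d1) * (q2 - d2)))}))"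

end

theory Submission
  imports Defs
begin


lemma std_normal_prob: "prob_space std_normal"
  unfolding std_normal_def by (rule prob_space_normal_density) simp

lemma std_normal_sym:
  "emeasure std_normal {0<..} = emeasure std_normal {..<0}"
proof -
  let ?f = "\<lambda>x::real. ennreal (std_normal_density x)"
  have "emeasure std_normal {0<..} = (\<integral>\<^sup>+ x. ?f x * indicator {0<..} x \<partial>lborel)"
    unfolding std_normal_def by (rule emeasure_density) auto
  also have "\<dots> = (\<integral>\<^sup>+ x. ?f x * indicator {0<..} x \<partial>(distr lborel borel uminus))"
    by (simp add: lborel_distr_uminus)
  also have "\<dots> = (\<integral>\<^sup>+ x. ?f (-x) * indicator {0<..} (-x) \<partial>lborel)"
    by (rule nn_integral_distr) auto
  also have "\<dots> = (\<integral>\<^sup>+ x. ?f x * indicator {..<0} x \<partial>lborel)"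
    by (rule nn_integral_cong) (auto simp: std_normal_density_def indicator_def)
  also have "\<dots> = emeasure std_normal {..<0}"
    unfolding std_normal_def by (rule emeasure_density[symmetric]) auto
  finally show ?thesis .
qed

lemma std_normal_point: "emeasure std_normal {0} = 0"
proof -
  have "{0::real} \<in> null_sets lborel" by (rule finite_imp_null_set_lborel) simp
  hence "AE x in lborel. x \<in> {0::real} \<longrightarrow> ennreal (std_normal_density x) = 0"
    by (rule AE_I') auto
  hence "{0} \<in> null_sets std_normal"
    unfolding std_normal_def by (subst null_sets_density_iff) auto
  thus ?thesis by auto
qed

lemma quantile_pos:
  assumes "is_upper_quantile a z" "a < 1/2"
  shows "z > 0"
proof (rule ccontr)
  assume "\<not> z > 0" hence z: "z \<le> 0" by simp
  interpret P: prob_space std_normal by (rule std_normal_prob)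
  have s: "sets std_normal = sets borel" unfolding std_normal_def by simp
  have e1: "P.prob {0<..} = P.prob {..<0}"
    using std_normal_sym by (simp add: measure_def)
  have e0: "P.prob {0} = 0" using std_normal_point by (simp add: measure_def)
  have "P.prob ({..<0} \<union> {0} \<union> {0<..}) = P.prob ({..<0} \<union> {0}) + P.prob {0<..}"
    by (rule P.finite_measure_Union) (auto simp: s)
  also have "P.prob ({..<0} \<union> {0}) = P.prob {..<0} + P.prob {0}"
    by (rule P.finite_measure_Union) (auto simp: s)
  also have "{..<0} \<union> {0} \<union> {0<..} = (UNIV::real set)" by auto
  finally have "P.prob {..<0} + P.prob {0} + P.prob {0<..} = P.prob UNIV" by simp
  moreover have "space std_normal = UNIV" by (simp add: std_normal_def)
  ultimately have "1 = 2 * P.prob {0<..}" using e1 e0 P.prob_space by simp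
  hence h: "P.prob {0<..} = 1/2" by simp
  have "P.prob {0<..} \<le> P.prob {z<..}"
    by (rule P.finite_measure_mono) (use z in \<open>auto simp: s\<close>)
  with h assms show False unfolding is_upper_quantile_def by simp
qed


definition Gam :: "real \<Rightarrow> real \<Rightarrow> real \<Rightarrow> real" where
  "Gam r x y = 1 + 1/x^2 + 1/y^2 + r * (x * y - 1/(x * y) + x/y + y/x)"

lemma Gam_sym: "Gam r x y = Gam r y x"
  unfolding Gam_def by (simp add: algebra_simps)

lemma Gam_scale:
  assumes k: "0 < k" "k \<le> 1" and x: "0 < x" "x < 1" and y: "0 < y" "y < 1" and r: "r \<le> 1"
  shows "Gam r x y \<le> Gam r (k * x) (k * y)"
proof -
  define z where "z = x * y"
  define z' where "z' = k^2 * z"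
  define s where "s = x/y + y/x"
  have zpos: "z > 0" "z < 1" unfolding z_def using x y mult_strict_mono[of x 1 y 1] by auto
  have "k^2 \<le> 1" using k by (simp add: power_le_one)
  hence z'le: "z' \<le> z" "z' > 0" unfolding z'_def using zpos k by (auto simp: mult_le_cancel_right1)
  have s2: "s \<ge> 2"
  proof -
    have "x/y + y/x - 2 = (x-y)^2/(x * y)" using x y by (simp add: field_simps power2_eq_square)
    moreover have "(x-y)^2/(x * y) \<ge> 0" using x y by simp
    ultimately show ?thesis unfolding s_def by linarith
  qed
  have g1: "Gam r x y = 1 + s/z + r * (z - 1/z + s)"
    unfolding Gam_def s_def z_def using x y by (simp add: field_simps power2_eq_square)
  have g2: "Gam r (k * x) (k * y) = 1 + s/z' + r * (z' - 1/z' + s)"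
    unfolding Gam_def s_def z'_def z_def using x y k by (simp add: field_simps power2_eq_square)
  have d: "Gam r (k * x) (k * y) - Gam r x y = (s - r) * (1/z' - 1/z) - r * (z - z')"
    unfolding g1 g2 by (simp add: algebra_simps diff_divide_distrib)
  have i1: "1/z' - 1/z = (z - z')/(z * z')" using z'le zpos by (simp add: field_simps)
  have "z * z' \<le> 1" using z'le zpos mult_mono[of z 1 z' 1] by auto
  hence i2: "(z - z')/(z * z') \<ge> z - z'" using z'le zpos
  proof -
    have "(z - z') * (z * z') \<le> (z-z') * 1" using z'le \<open>z * z' \<le> 1\<close> by (intro mult_left_mono) auto
    thus ?thesis using z'le zpos by (simp add: le_divide_eq)
  qed
  have "(s - r) * (1/z' - 1/z) \<ge> (s - r) * (z - z')"
    using i1 i2 s2 r by (intro mult_left_mono) auto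
  moreover have "(s - r) * (z - z') \<ge> r * (z-z')"
    using s2 r z'le by (intro mult_right_mono) auto
  ultimately show ?thesis using d by linarith
qed

lemma Gam_y:
  assumes x: "0 < x" "x < 1" and y: "0 < y1" "y1 \<le> y2" "y2 < 1" and r: "r * y2 \<le> x"
  shows "Gam r x y2 \<le> Gam r x y1"
proof -
  define A where "A = x + 1/x"
  define B where "B = 1/x - x"
  have xx: "x * x < 1" "0 < 1 + x * x" using x mult_strict_mono[of x 1 x 1] by (auto simp: add_pos_nonneg)
  have AB: "A > 0" "B > 0" "A + B = 2/x" unfolding A_def B_def using x xx
    by (auto simp: field_simps)
  have y2: "y2 > 0" using y by simp
  have T: "\<And>y. y > 0 \<Longrightarrow> Gam r x y = 1 + 1/x^2 + 1/y^2 + r * (y * A - B/y)"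
    unfolding Gam_def A_def B_def using x by (simp add: field_simps)
  define p where "p = y1 * y2"
  have p: "0 < p" "p \<le> 1" unfolding p_def using y mult_mono[of y1 1 y2 1] by auto
  define W where "W = (y1+y2) - r * (A * p^2 + B * p)"
  have eq: "Gam r x y1 - Gam r x y2 = (y2 - y1) * W / (p^2)"
    unfolding T[OF y(1)] T[OF y2] W_def p_def using y y2
    by (simp add: field_simps power2_eq_square)
  have W: "W \<ge> 0"
  proof (cases "r \<le> 0")
    case True
    have "r * (A * p^2 + B * p) \<le> 0" using True AB p by (intro mult_nonpos_nonneg) auto
    thus ?thesis unfolding W_def using y by linarith
  next
    case False
    have "A * p^2 \<le> A * p" using AB p by (simp add: power2_eq_square mult_le_cancel_left1)
    hence "A * p^2 + B * p \<le> (A+B) * p" by (simp add: algebra_simps)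
    hence "A * p^2 + B * p \<le> (2/x) * p" using AB by simp
    hence "r * (A * p^2 + B * p) \<le> r * ((2/x) * p)" using False by (intro mult_left_mono) auto
    also have "r * ((2/x) * p) = 2 * y1 * (r * y2)/x" unfolding p_def by simp
    also have "\<dots> \<le> 2 * y1 * x/x" using r y x by (intro divide_right_mono mult_left_mono) auto
    also have "\<dots> = 2 * y1" using x by simp
    finally show ?thesis unfolding W_def using y by linarith
  qed
  have "(y2 - y1) * W / (p^2) \<ge> 0" using W y by simp
  thus ?thesis using eq by linarith
qed

lemma Gam_mono:
  assumes x: "0 < x'" "x' \<le> x" "x < 1" and y: "0 < y'" "y' \<le> y" "y < 1"
    and r: "r * y \<le> x" "r * x \<le> y"
  shows "Gam r x y \<le> Gam r x' y'"
proof -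
  have x0: "x > 0" and y0: "y > 0" using x y by auto
  have r1: "r \<le> 1"
  proof (rule ccontr)
    assume "\<not> r \<le> 1"
    hence "r * y > y" "r * x > x" using x0 y0 by auto
    thus False using r by linarith
  qed
  show ?thesis
  proof (cases "x'/x \<ge> y'/y")
    case True
    define k where "k = x'/x"
    have k: "0 < k" "k \<le> 1" unfolding k_def using x by auto
    have kx: "k * x = x'" unfolding k_def using x0 by simp
    have ky: "y' \<le> k * y" using True y0 unfolding k_def by (simp add: field_simps)
    have "Gam r x y \<le> Gam r (k * x) (k * y)" by (rule Gam_scale) (use k x y r1 in auto)
    also have "\<dots> = Gam r x' (k * y)" by (simp add: kx)
    also have "\<dots> \<le> Gam r x' y'"
    proof (rule Gam_y)
      show "0 < x'" "x' < 1" "0 < y'" "y' \<le> k * y" using x y ky by auto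
      have "k * y \<le> 1 * y" using k y0 by (intro mult_right_mono) auto
      thus "k * y < 1" using y by linarith
      have "r * (k * y) = k * (r * y)" by simp
      also have "\<dots> \<le> k * x" using r k by (intro mult_left_mono) auto
      finally show "r * (k * y) \<le> x'" using kx by simp
    qed
    finally show ?thesis .
  next
    case False
    define k where "k = y'/y"
    have k: "0 < k" "k \<le> 1" unfolding k_def using y by auto
    have ky: "k * y = y'" unfolding k_def using y0 by simp
    have kx: "x' \<le> k * x" using False x0 unfolding k_def by (simp add: field_simps)
    have "Gam r x y \<le> Gam r (k * x) (k * y)" by (rule Gam_scale) (use k x y r1 in auto)
    also have "\<dots> = Gam r y' (k * x)" by (simp add: ky Gam_sym)
    also have "\<dots> \<le> Gam r y' x'"
    proof (rule Gam_y)
      show "0 < y'" "y' < 1" "0 < x'" "x' \<le> k * x" using x y kx by auto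
      have "k * x \<le> 1 * x" using k x0 by (intro mult_right_mono) auto
      thus "k * x < 1" using x by linarith
      have "r * (k * x) = k * (r * x)" by simp
      also have "\<dots> \<le> k * y" using r k by (intro mult_left_mono) auto
      finally show "r * (k * x) \<le> y'" using ky by simp
    qed
    also have "\<dots> = Gam r x' y'" by (simp add: Gam_sym)
    finally show ?thesis .
  qed
qed

lemma F_pos:
  fixes S0 S1 u v :: real
  assumes S: "0 < S1" "S1 < S0" and uv: "0 < v" "v < u" "u < 1"
    and key: "S1^2 * (u * (1-u)) \<le> S0^2 * (v *(1-v))"
  shows "S1* (v+3 * u-2 * u* v-2 * u^2) < S0 * (u+3* v-2 * u* v-2* v^2)"
proof -
  define K1 where "K1 = u+3* v-2 * u* v-2* v^2"
  define K2 where "K2 = v+3 * u-2 * u* v-2 * u^2"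
  have a1: "u * (1-v) > 0" "v *(3-2* v-u) > 0" using uv by auto
  have "K1 = u * (1-v) + v *(3-2* v-u)" unfolding K1_def by (simp add: algebra_simps power2_eq_square)
  hence K1: "K1 > 0" using a1 by linarith
  have K12: "K1 - K2 = 2 * (u-v) * (u+v-1)" unfolding K1_def K2_def by (simp add: algebra_simps power2_eq_square)
  show ?thesis
  proof (cases "u+v \<ge> 1")
    case True
    have "2 * (u-v) * (u+v-1) \<ge> 0" using True uv by (intro mult_nonneg_nonneg) auto
    hence "K2 \<le> K1" using K12 by linarith
    hence "S1 * K2 \<le> S1 * K1" using S by (intro mult_left_mono) auto
    also have "S1 * K1 < S0 * K1" using S K1 by simp
    finally show ?thesis unfolding K1_def K2_def .
  next
    case False
    define A where "A = sqrt (u * (1-u))"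
    define B where "B = sqrt (v *(1-v))"
    have gu: "u * (1-u) > 0" and gv: "v *(1-v) > 0" using uv by auto
    have A: "A > 0" "A^2 = u * (1-u)" unfolding A_def using gu by auto
    have B: "B > 0" "B^2 = v *(1-v)" unfolding B_def using gv by auto
    have SAB: "S1 * A \<le> S0 * B"
    proof (rule power2_le_imp_le)
      show "(S1 * A)^2 \<le> (S0 * B)^2" using key A B by (simp add: power_mult_distrib)
      show "0 \<le> S0 * B" using S B by simp
    qed
    define X where "X = u * (1-v)"
    define Y where "Y = v *(1-u)"
    have XY: "X > 0" "Y > 0" "X - Y = u - v" unfolding X_def Y_def using uv by (auto simp: algebra_simps)
    have AB: "A * B = sqrt (X * Y)" unfolding A_def B_def X_def Y_def
      by (simp add: real_sqrt_mult[symmetric] algebra_simps)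
    have ABlt: "2 * (A * B) < X + Y"
    proof (rule power2_less_imp_less)
      have "(X-Y)^2 > 0" using XY uv by simp
      moreover have "(2 * (A * B))^2 = 4 * (X * Y)" unfolding AB using XY by (simp add: power_mult_distrib)
      ultimately show "(2 * (A * B))^2 < (X+Y)^2" by (simp add: power2_eq_square algebra_simps)
      show "0 \<le> X + Y" using XY by simp
    qed
    have id1: "(A * K1 - B * K2) * (A+B) = A^2 * K1 - B^2 * K2 + A * B * (K1-K2)"
      by (simp add: algebra_simps power2_eq_square)
    have id2: "A^2 * K1 - B^2 * K2 = (u-v) * (1-u-v) * (X+Y)"
      unfolding A B K1_def K2_def X_def Y_def by (simp add: algebra_simps power2_eq_square)
    have id3: "(A * K1 - B * K2) * (A+B) = (u-v) * (1-u-v) * ((X+Y) - 2 * (A * B))"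
      unfolding id1 id2 K12 by (simp add: algebra_simps)
    have "(u-v) * (1-u-v) * ((X+Y) - 2 * (A * B)) > 0" using False uv ABlt by simp
    hence "(A * K1 - B * K2) * (A+B) > 0" using id3 by simp
    hence br: "A * K1 > B * K2" using A B by (simp add: zero_less_mult_iff)
    show ?thesis
    proof (cases "K2 \<le> 0")
      case True
      have "S1 * K2 \<le> 0" using True S by (simp add: mult_nonneg_nonpos)
      moreover have "S0 * K1 > 0" using S K1 by simp
      ultimately show ?thesis unfolding K1_def K2_def by linarith
    next
      case False
      have "A * (S1 * K2) = (S1 * A) * K2" by simp
      also have "\<dots> \<le> (S0 * B) * K2" using SAB False by (intro mult_right_mono) auto
      also have "\<dots> = S0 * (B * K2)" by simp
      also have "\<dots> < S0 * (A * K1)" using br S by simp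
      also have "\<dots> = A * (S0 * K1)" by simp
      finally have "A * (S1 * K2) < A * (S0 * K1)" .
      thus ?thesis using A unfolding K1_def K2_def by simp
    qed
  qed
qed

definition nn :: "real \<Rightarrow> real \<Rightarrow> real \<Rightarrow> real" where
  "nn r x y = (1 + r * x * y)/((1+x^2) * (1+y^2))"
definition SS :: "real \<Rightarrow> real \<Rightarrow> real" where
  "SS x y = x * y/((1+x^2) * (1+y^2))"

lemma nn_lin: "nn r x y = 1/((1+x^2) * (1+y^2)) + r * SS x y"
  unfolding nn_def SS_def by (simp add: add_divide_distrib)

lemma nn_sym: "nn r x y = nn r y x"
  unfolding nn_def by (simp add: algebra_simps)

lemma gamma_id:
  assumes x: "x > 0" and y: "y > 0"
  shows "nn r x y * (1 - nn r x y) = (SS x y)^2 * (Gam r x y - r^2)"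
proof -
  define D where "D = (1+x^2) * (1+y^2)"
  define z where "z = x * y"
  have D: "D > 0" unfolding D_def by (auto simp: add_pos_nonneg)
  have z: "z > 0" unfolding z_def using x y by simp
  have g: "z^2 * Gam r x y = x^2+y^2+z^2 + r * (z^3 - z + x^2 * z + y^2 * z)"
    unfolding Gam_def z_def using x y by (simp add: field_simps power2_eq_square power3_eq_cube)
  have D1: "D - 1 = x^2+y^2+z^2" unfolding D_def z_def by (simp add: algebra_simps power2_eq_square)
  have "nn r x y * (1 - nn r x y) = (1+r * z) * (D - 1 - r * z)/D^2"
    unfolding nn_def D_def[symmetric] z_def using D by (simp add: field_simps power2_eq_square)
  also have "(1+r * z) * (D - 1 - r * z) = z^2 * Gam r x y - z^2 * r^2"
    unfolding g D1 by (simp add: algebra_simps power2_eq_square power3_eq_cube)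
  also have "(z^2 * Gam r x y - z^2 * r^2)/D^2 = (SS x y)^2 * (Gam r x y - r^2)"
    unfolding SS_def D_def[symmetric] z_def[symmetric] using D by (simp add: field_simps power2_eq_square)
  finally show ?thesis .
qed

lemma h_mono:
  fixes x x' :: real
  assumes "0 < x'" "x' < x" "x < 1"
  shows "x'/(1+x'^2) < x/(1+x^2)"
proof -
  have "x' * (1+x^2) < x * (1+x'^2)"
  proof -
    have "x * (1+x'^2) - x' * (1+x^2) = (x - x') * (1 - x * x')" by (simp add: algebra_simps power2_eq_square)
    moreover have "x * x' < 1" using assms mult_strict_mono[of x 1 x' 1] by auto
    ultimately show ?thesis using assms by (smt (verit) mult_pos_pos)
  qed
  thus ?thesis by (simp add: field_simps add_pos_nonneg)
qed

lemma SS_mono: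
  assumes "0 < x'" "x' < x" "x < 1" "0 < y'" "y' < y" "y < 1"
  shows "SS x' y' < SS x y"
proof -
  have e: "\<And>a b. SS a b = (a/(1+a^2)) * (b/(1+b^2))" unfolding SS_def by simp
  have "x'/(1+x'^2) < x/(1+x^2)" "y'/(1+y'^2) < y/(1+y^2)" using assms h_mono by auto
  moreover have "x'/(1+x'^2) > 0" "y'/(1+y'^2) > 0" using assms by (auto simp: add_pos_nonneg)
  ultimately show ?thesis unfolding e by (intro mult_strict_mono) auto
qed

lemma SS_pos: "0 < x \<Longrightarrow> 0 < y \<Longrightarrow> 0 < SS x y"
  unfolding SS_def by (auto simp: add_pos_nonneg)

lemma nn_range:
  assumes x: "0 < x" "x < 1" and y: "0 < y" "y < 1" and r: "-(x * y) \<le> r" "r \<le> 1"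
  shows "0 < nn r x y" "nn r x y < 1"
proof -
  have p: "(1+x^2) * (1+y^2) > 0" by (auto simp: add_pos_nonneg)
  have z: "0 < x * y" "x * y < 1" using x y mult_strict_mono[of x 1 y 1] by auto
  have "r * (x * y) \<ge> -(x * y) * (x * y)" using r z by (intro mult_right_mono) auto
  moreover have "(x * y) * (x * y) < 1" using z mult_strict_mono[of "x * y" 1 "x * y" 1] by auto
  ultimately have "1 + r * x * y > 0" by (simp add: algebra_simps)
  thus "0 < nn r x y" unfolding nn_def using p by simp
  have "r * (x * y) \<le> 1 * (x * y)" using r z by (intro mult_right_mono) auto
  moreover have "x * y < x^2 + y^2 + x^2 * y^2"
  proof -
    have "x^2 + y^2 - x * y = (x - y)^2 + x * y" by (simp add: algebra_simps power2_eq_square)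
    moreover have "x^2 * y^2 > 0" using x y by simp
    ultimately show ?thesis using z by (smt (verit) zero_le_power2)
  qed
  ultimately have "1 + r * x * y < (1+x^2) * (1+y^2)" by (simp add: algebra_simps)
  thus "nn r x y < 1" unfolding nn_def using p by simp
qed

lemma e_pos_aux:
  assumes x: "0 < x'" "x' < x" "x < 1" and y: "0 < y'" "y' < y" "y < 1"
    and r: "r * y \<le> x" and xy: "x \<le> y"
  shows "nn r x y < nn r x' y'"
proof -
  have x0: "x > 0" and y0: "y > 0" using x y by auto
  define rs where "rs = x/y"
  have rrs: "r \<le> rs" unfolding rs_def using r y0 by (simp add: field_simps)
  have pp: "(1+x^2) > 0" "(1+y^2) > 0" "(1+x'^2) > 0" "(1+y'^2) > 0" by (auto simp: add_pos_nonneg)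
  have pq: "(1+x^2) * (1+y^2) > 0" using pp by simp
  have "rs * x * y = x^2" unfolding rs_def using y0 by (simp add: power2_eq_square)
  hence n0: "nn rs x y = 1/(1+y^2)" unfolding nn_def using pp by simp
  have "rs * x' * y' = x * x' * y'/y" unfolding rs_def by simp
  hence n1: "nn rs x' y' = (1 + x * x' * y'/y)/((1+x'^2) * (1+y'^2))" unfolding nn_def by simp
  have key: "(1+x'^2) * (1+y'^2) * y < (y + x * x' * y') * (1+y^2)"
  proof -
    define s where "s = x'^2"
    have "x * x' * y' \<ge> x' * x' * y'" using x y by (intro mult_right_mono) auto
    hence "(y + x * x' * y') * (1+y^2) \<ge> (y + s * y') * (1+y^2)" unfolding s_def using pp
      by (intro mult_right_mono) (auto simp: power2_eq_square)
    moreover have "(y + s * y') * (1+y^2) - (1+s) * (1+y'^2) * y = (y - y') * (y * (y+y') - s * (1-y * y'))"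
      by (simp add: algebra_simps power2_eq_square)
    moreover have "s * (1-y * y') < y * (y+y')"
    proof -
      have "s \<le> y^2" unfolding s_def using x xy by (intro power_mono) auto
      moreover have "y * y' > 0" "y * y' < 1" using y mult_strict_mono[of y 1 y' 1] by auto
      moreover have "s \<ge> 0" unfolding s_def by simp
      ultimately have "s * (1-y * y') \<le> s * 1" by (intro mult_left_mono) auto
      hence "s * (1-y * y') \<le> y^2" using \<open>s \<le> y^2\<close> by linarith
      moreover have "y^2 < y * (y+y')" using y by (simp add: power2_eq_square algebra_simps)
      ultimately show ?thesis by linarith
    qed
    moreover have "(y - y') * (y * (y+y') - s * (1-y * y')) > 0" using calculation(3) y by simp
    ultimately show ?thesis unfolding s_def by linarith
  qed
  have "(1+x'^2) * (1+y'^2) < (1 + x * x' * y'/y) * (1+y^2)"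
  proof -
    have "(1 + x * x' * y'/y) = (y + x * x' * y')/y" using y0 by (simp add: field_simps)
    hence "(1 + x * x' * y'/y) * (1+y^2) = ((y + x * x' * y') * (1+y^2))/y" by simp
    moreover have "(1+x'^2) * (1+y'^2) < ((y + x * x' * y') * (1+y^2))/y"
      using key y0 by (simp add: less_divide_eq)
    ultimately show ?thesis by simp
  qed
  hence H: "(1+x'^2) * (1+y'^2)/(1+y^2) < (1 + x * x' * y'/y)"
    using pp by (simp add: divide_less_eq)
  have P'pos: "(1+x'^2) * (1+y'^2) > 0" using pp by simp
  have "1/(1+y^2) = ((1+x'^2) * (1+y'^2)/(1+y^2)) / ((1+x'^2) * (1+y'^2))"
    using P'pos pp by simp
  also have "\<dots> < (1 + x * x' * y'/y) / ((1+x'^2) * (1+y'^2))"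
    using H P'pos by (rule divide_strict_right_mono)
  finally have d0: "nn rs x y < nn rs x' y'" unfolding n0 n1 .
  have "(r - rs) * (SS x' y' - SS x y) \<ge> 0"
    using rrs SS_mono[OF x y] by (intro mult_nonpos_nonpos) auto
  thus ?thesis using d0 unfolding nn_lin by (simp add: algebra_simps)
qed

lemma e_pos:
  assumes x: "0 < x'" "x' < x" "x < 1" and y: "0 < y'" "y' < y" "y < 1"
    and r: "r * y \<le> x" "r * x \<le> y"
  shows "nn r x y < nn r x' y'"
proof (cases "x \<le> y")
  case True thus ?thesis using e_pos_aux[OF x y r(1)] by simp
next
  case False
  have "nn r y x < nn r y' x'" using e_pos_aux[OF y x r(2)] False by simp
  thus ?thesis by (simp add: nn_sym)
qed

lemma G_strict_mono:
  fixes a b s0 s1 lo hi :: real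
  assumes H: "\<And>r. lo \<le> r \<Longrightarrow> r \<le> hi \<Longrightarrow> 0 < b - r * s1 \<and> b - r * s1 < a - r * s0 \<and> a - r * s0 < 1 \<and>
     s1 * ((b-r * s1)+3 * (a-r * s0)-2 * (a-r * s0) * (b-r * s1)-2 * (a-r * s0)^2) < s0 * ((a-r * s0)+3 * (b-r * s1)-2 * (a-r * s0) * (b-r * s1)-2 * (b-r * s1)^2)"
  shows "strict_mono_on {lo..hi} (\<lambda>r. ((a-r * s0) * (1-(a-r * s0)) + (b-r * s1) * (1-(b-r * s1)))/((b-r * s1)-(a-r * s0))^2)"
proof (rule strict_mono_onI)
  fix r t assume rt: "r \<in> {lo..hi}" "t \<in> {lo..hi}" "r < t"
  define N where "N = (\<lambda>r. (a-r * s0) * (1-(a-r * s0)) + (b-r * s1) * (1-(b-r * s1)))"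
  define D where "D = (\<lambda>r. (b-r * s1)-(a-r * s0))"
  have "N r / (D r)^2 < N t / (D t)^2"
  proof (rule DERIV_pos_imp_increasing[OF rt(3)])
    fix x assume x: "r \<le> x" "x \<le> t"
    hence "lo \<le> x" "x \<le> hi" using rt by auto
    note h = H[OF this]
    define u where "u = a - x * s0"
    define v where "v = b - x * s1"
    have uv: "0 < v" "v < u" "u < 1" "s1* (v+3 * u-2 * u* v-2 * u^2) < s0 * (u+3* v-2 * u* v-2* v^2)"
      using h unfolding u_def v_def by auto
    have Dx: "D x = v - u" unfolding D_def u_def v_def by simp
    have Nx: "N x = u * (1-u) + v *(1-v)" unfolding N_def u_def v_def by simp
    have dN: "(N has_real_derivative (-s0 * (1-2 * u) - s1 * (1-2* v))) (at x)"
      unfolding N_def u_def v_def by (auto intro!: derivative_eq_intros simp: algebra_simps)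
    have dD: "((\<lambda>r. (D r)^2) has_real_derivative (2* (v-u) * (s0-s1))) (at x)"
      unfolding D_def u_def v_def by (auto intro!: derivative_eq_intros simp: algebra_simps)
    have D0: "(D x)^2 \<noteq> 0" using Dx uv by simp
    have dG: "((\<lambda>r. N r / (D r)^2) has_real_derivative
        (((-s0 * (1-2 * u) - s1 * (1-2* v)) * (D x)^2 - N x * (2* (v-u) * (s0-s1))) / ((D x)^2 * (D x)^2))) (at x)"
      by (rule DERIV_divide[OF dN dD D0])
    have br: "(-s0 * (1-2 * u) - s1 * (1-2* v))* (v-u) - 2 * (u * (1-u) + v *(1-v)) * (s0-s1)
        = s1* (v+3 * u-2 * u* v-2 * u^2) - s0 * (u+3* v-2 * u* v-2* v^2)"
      by (simp add: algebra_simps power2_eq_square)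
    have num: "(-s0 * (1-2 * u) - s1 * (1-2* v)) * (D x)^2 - N x * (2* (v-u) * (s0-s1))
        = (v-u) * ((-s0 * (1-2 * u) - s1 * (1-2* v))* (v-u) - 2 * (u * (1-u) + v *(1-v)) * (s0-s1))"
      unfolding Dx Nx by (simp add: algebra_simps power2_eq_square)
    have "(v-u) * ((-s0 * (1-2 * u) - s1 * (1-2* v))* (v-u) - 2 * (u * (1-u) + v *(1-v)) * (s0-s1)) > 0"
      unfolding br using uv by (intro mult_neg_neg) auto
    moreover have "(D x)^2 * (D x)^2 > 0" using D0 by simp
    ultimately have "((-s0 * (1-2 * u) - s1 * (1-2* v)) * (D x)^2 - N x * (2* (v-u) * (s0-s1))) / ((D x)^2 * (D x)^2) > 0"
      unfolding num by simp
    thus "\<exists>y. ((\<lambda>r. N r / (D r)^2) has_real_derivative y) (at x) \<and> 0 < y" using dG by blast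
  qed
  thus "((a-r * s0) * (1-(a-r * s0)) + (b-r * s1) * (1-(b-r * s1)))/((b-r * s1)-(a-r * s0))^2
      < ((a-t * s0) * (1-(a-t * s0)) + (b-t * s1) * (1-(b-t * s1)))/((b-t * s1)-(a-t * s0))^2"
    unfolding N_def D_def by simp
qed


lemma odds:
  fixes p :: real
  assumes "0 < p" "p < 1/2"
  shows "sqrt (p/(1-p)) > 0" "sqrt (p/(1-p)) < 1"
    "p = (sqrt (p/(1-p)))^2/(1+(sqrt (p/(1-p)))^2)" "1 - p = 1/(1+(sqrt (p/(1-p)))^2)"
proof -
  define x where "x = sqrt (p/(1-p))"
  have pp: "p/(1-p) > 0" using assms by simp
  have x2: "x^2 = p/(1-p)" unfolding x_def using pp by simp
  show "sqrt (p/(1-p)) > 0" using pp by simp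
  have "p/(1-p) < 1" using assms by (simp add: divide_less_eq)
  thus "sqrt (p/(1-p)) < 1" by simp
  have "p = x^2/(1+x^2)" unfolding x2 using assms by (simp add: field_simps)
  thus "p = (sqrt (p/(1-p)))^2/(1+(sqrt (p/(1-p)))^2)" unfolding x_def .
  have "1 - p = 1/(1+x^2)" unfolding x2 using assms by (simp add: field_simps)
  thus "1 - p = 1/(1+(sqrt (p/(1-p)))^2)" unfolding x_def .
qed

lemma odds_mono:
  fixes p p' :: real
  assumes "0 < p'" "p' < p" "p < 1"
  shows "sqrt (p'/(1-p')) < sqrt (p/(1-p))"
proof -
  have "p'/(1-p') < p/(1-p)" using assms by (simp add: field_simps)
  thus ?thesis by simp
qed

lemma sqrt_prod4:
  fixes x y :: real
  assumes "x > 0" "y > 0"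
  shows "sqrt ((x^2/(1+x^2)) * (y^2/(1+y^2)) * (1/(1+x^2)) * (1/(1+y^2))) = SS x y"
proof -
  have "(x^2/(1+x^2)) * (y^2/(1+y^2)) * (1/(1+x^2)) * (1/(1+y^2)) = (SS x y)^2"
    unfolding SS_def by (simp add: power2_eq_square ac_simps)
  moreover have "SS x y > 0" using SS_pos assms by simp
  ultimately show ?thesis by simp
qed

definition Gf :: "real \<Rightarrow> real \<Rightarrow> real \<Rightarrow> real \<Rightarrow> real \<Rightarrow> real" where
  "Gf a b s0 s1 r = ((a-r * s0) * (1-(a-r * s0)) + (b-r * s1) * (1-(b-r * s1)))/((b-r * s1)-(a-r * s0))^2"

lemma ss_eq:
  "sample_size za zb (p1, p2) (d1, d2) r =
   2 * (za+zb)^2 * Gf (1 - (1-p1) * (1-p2)) (1 - ((1-p1)-d1) * ((1-p2)-d2))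
     (sqrt (p1 * p2 * (1 - p1) * (1 - p2))) (sqrt ((p1 + d1) * (p2 + d2) * ((1 - p1) - d1) * ((1 - p2) - d2))) r"
proof -
  define s0 where "s0 = sqrt (p1 * p2 * (1 - p1) * (1 - p2))"
  define s1 where "s1 = sqrt ((p1 + d1) * (p2 + d2) * ((1 - p1) - d1) * ((1 - p2) - d2))"
  define a where "a = 1 - (1-p1) * (1-p2)"
  define b where "b = 1 - ((1-p1)-d1) * ((1-p2)-d2)"
  have ps: "p_star0 (p1,p2) r = a - r * s0" unfolding p_star0_def a_def s0_def by simp
  have ds: "delta_star (p1,p2) (d1,d2) r = (b - r * s1) - (a - r * s0)"
    unfolding delta_star_def a_def b_def s0_def s1_def by (simp add: algebra_simps)
  show ?thesis unfolding sample_size_def Let_def ps ds Gf_def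
    unfolding a_def[symmetric] b_def[symmetric] s0_def[symmetric] s1_def[symmetric]
    by (simp add: algebra_simps)
qed

theorem theorem1:
  fixes \<alpha> \<beta> z\<alpha> z\<beta> p1 p2 d1 d2 :: real
  assumes "0 < \<alpha>" "\<alpha> < 1/2" "0 < \<beta>" "\<beta> < 1/2"
    and "is_upper_quantile \<alpha> z\<alpha>" "is_upper_quantile \<beta> z\<beta>"
    and "0 < p1" "p1 < 1/2" "0 < p2" "p2 < 1/2"
    and "d1 < 0" "d2 < 0" "p1 + d1 > 0" "p2 + d2 > 0"
  shows "strict_mono_on {B_L (p1, p2) (d1, d2) .. B_U (p1, p2) (d1, d2)}
           (\<lambda>\<rho>. sample_size z\<alpha> z\<beta> (p1, p2) (d1, d2) \<rho>)
       \<and> (\<forall>\<rho> \<in> {B_L (p1, p2) (d1, d2) .. B_U (p1, p2) (d1, d2)}.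
            sample_size z\<alpha> z\<beta> (p1, p2) (d1, d2) (B_L (p1, p2) (d1, d2))
              \<le> sample_size z\<alpha> z\<beta> (p1, p2) (d1, d2) \<rho>
          \<and> sample_size z\<alpha> z\<beta> (p1, p2) (d1, d2) \<rho>
              \<le> sample_size z\<alpha> z\<beta> (p1, p2) (d1, d2) (B_U (p1, p2) (d1, d2)))"
proof -
  have za: "z\<alpha> > 0" using quantile_pos assms(2,5) by blast
  have zb: "z\<beta> > 0" using quantile_pos assms(4,6) by blast
  define C where "C = 2 * (z\<alpha>+z\<beta>)^2"
  have C: "C > 0" unfolding C_def using za zb by simp
  define x where "x = sqrt (p1/(1-p1))"
  define y where "y = sqrt (p2/(1-p2))"
  define x' where "x' = sqrt ((p1+d1)/(1-(p1+d1)))"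
  define y' where "y' = sqrt ((p2+d2)/(1-(p2+d2)))"
  have ox: "x > 0" "x < 1" "p1 = x^2/(1+x^2)" "1 - p1 = 1/(1+x^2)"
    using odds[of p1] assms unfolding x_def by auto
  have oy: "y > 0" "y < 1" "p2 = y^2/(1+y^2)" "1 - p2 = 1/(1+y^2)"
    using odds[of p2] assms unfolding y_def by auto
  have ox': "x' > 0" "x' < 1" "p1+d1 = x'^2/(1+x'^2)" "1 - (p1+d1) = 1/(1+x'^2)"
    using odds[of "p1+d1"] assms unfolding x'_def by auto
  have oy': "y' > 0" "y' < 1" "p2+d2 = y'^2/(1+y'^2)" "1 - (p2+d2) = 1/(1+y'^2)"
    using odds[of "p2+d2"] assms unfolding y'_def by auto
  have xx': "x' < x" unfolding x_def x'_def using assms by (intro odds_mono) auto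
  have yy': "y' < y" unfolding y_def y'_def using assms by (intro odds_mono) auto
  define s0 where "s0 = sqrt (p1 * p2 * (1 - p1) * (1 - p2))"
  define s1 where "s1 = sqrt ((p1 + d1) * (p2 + d2) * ((1 - p1) - d1) * ((1 - p2) - d2))"
  define a where "a = 1 - (1-p1) * (1-p2)"
  define b where "b = 1 - ((1-p1)-d1) * ((1-p2)-d2)"
  have s0: "s0 = SS x y"
  proof -
    have "s0 = sqrt ((x^2/(1+x^2)) * (y^2/(1+y^2)) * (1/(1+x^2)) * (1/(1+y^2)))"
      unfolding s0_def using ox(3,4) oy(3,4) by metis
    thus ?thesis using sqrt_prod4 ox oy by simp
  qed
  have s1: "s1 = SS x' y'"
  proof -
    have e1: "(1 - p1) - d1 = 1 - (p1+d1)" "(1 - p2) - d2 = 1 - (p2+d2)" by simp_all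
    have "s1 = sqrt ((x'^2/(1+x'^2)) * (y'^2/(1+y'^2)) * (1/(1+x'^2)) * (1/(1+y'^2)))"
      unfolding s1_def e1 using ox'(3,4) oy'(3,4) by metis
    thus ?thesis using sqrt_prod4 ox' oy' by simp
  qed
  have a: "\<And>r. a - r * s0 = 1 - nn r x y"
  proof -
    fix r
    have "(1-p1) * (1-p2) = 1/((1+x^2) * (1+y^2))" using ox(4) oy(4) by simp
    thus "a - r * s0 = 1 - nn r x y" unfolding a_def s0 nn_lin by simp
  qed
  have b: "\<And>r. b - r * s1 = 1 - nn r x' y'"
  proof -
    fix r
    have "(1-p1)-d1 = 1/(1+x'^2)" "(1-p2)-d2 = 1/(1+y'^2)" using ox'(4) oy'(4) by simp_all
    hence "((1-p1)-d1) * ((1-p2)-d2) = 1/((1+x'^2) * (1+y'^2))" by simp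
    thus "b - r * s1 = 1 - nn r x' y'" unfolding b_def s1 nn_lin by simp
  qed
  define bl where "bl = B_L (p1, p2) (d1, d2)"
  define bu where "bu = B_U (p1, p2) (d1, d2)"
  have sq1: "sqrt ((p1 * p2) / ((1-p1) * (1-p2))) = x * y"
    unfolding x_def y_def by (simp add: real_sqrt_mult[symmetric])
  have sq2: "sqrt (((p1 + d1) * (p2 + d2)) / (((1-p1) - d1) * ((1-p2) - d2))) = x' * y'"
    unfolding x'_def y'_def by (simp add: real_sqrt_mult[symmetric] algebra_simps)
  have sq3: "sqrt ((p1 * (1-p2)) / (p2 * (1-p1))) = x/y"
    unfolding x_def y_def by (simp add: real_sqrt_divide[symmetric] algebra_simps)
  have sq4: "sqrt ((p2 * (1-p1)) / (p1 * (1-p2))) = y/x"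
    unfolding x_def y_def by (simp add: real_sqrt_divide[symmetric] algebra_simps)
  have bl1: "-(x * y) \<le> bl" "-(x' * y') \<le> bl"
    unfolding bl_def B_L_def Let_def sq1[symmetric] sq2[symmetric] by auto
  have bu1: "bu \<le> x/y" "bu \<le> y/x"
    unfolding bu_def B_U_def Let_def sq3[symmetric] sq4[symmetric] by auto
  have cond: "0 < b - r * s1 \<and> b - r * s1 < a - r * s0 \<and> a - r * s0 < 1 \<and>
     s1 * ((b-r * s1)+3 * (a-r * s0)-2 * (a-r * s0) * (b-r * s1)-2 * (a-r * s0)^2) < s0 * ((a-r * s0)+3 * (b-r * s1)-2 * (a-r * s0) * (b-r * s1)-2 * (b-r * s1)^2)"
    if r: "bl \<le> r" "r \<le> bu" for r
  proof -
    have b1: "bu * y \<le> x" "bu * x \<le> y" using bu1 ox oy by (simp_all add: pos_le_divide_eq)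
    have "r * y \<le> bu * y" "r * x \<le> bu * x" using r ox oy by (auto intro: mult_right_mono)
    hence r1: "r * y \<le> x" and r2: "r * x \<le> y" using b1 by auto
    have rle1: "r \<le> 1"
    proof (rule ccontr)
      assume "\<not> r \<le> 1"
      hence "r * y > y" "r * x > x" using ox oy by auto
      thus False using r1 r2 by linarith
    qed
    have rl: "-(x * y) \<le> r" "-(x' * y') \<le> r" using bl1 r by auto
    define u where "u = a - r * s0"
    define v where "v = b - r * s1"
    have un: "u = 1 - nn r x y" unfolding u_def a ..
    have vn: "v = 1 - nn r x' y'" unfolding v_def b ..
    have n0: "0 < nn r x y" "nn r x y < 1" using nn_range[OF ox(1,2) oy(1,2) rl(1) rle1] by auto
    have n1: "0 < nn r x' y'" "nn r x' y' < 1" using nn_range[OF ox'(1,2) oy'(1,2) rl(2) rle1] by auto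
    have e: "nn r x y < nn r x' y'" using e_pos[OF ox'(1) xx' ox(2) oy'(1) yy' oy(2) r1 r2] .
    have uv: "0 < v" "v < u" "u < 1" using un vn n0 n1 e by auto
    have S: "0 < s1" "s1 < s0" unfolding s0 s1 using SS_pos[OF ox'(1) oy'(1)] SS_mono[OF ox'(1) xx' ox(2) oy'(1) yy' oy(2)] by auto
    have G: "Gam r x y \<le> Gam r x' y'"
      using Gam_mono[OF ox'(1) _ ox(2) oy'(1) _ oy(2) r1 r2] xx' yy' by auto
    have gu: "u * (1-u) = s0^2 * (Gam r x y - r^2)"
      unfolding un s0 using gamma_id[OF ox(1) oy(1), of r] by (simp add: algebra_simps)
    have gv: "v *(1-v) = s1^2 * (Gam r x' y' - r^2)"
      unfolding vn s1 using gamma_id[OF ox'(1) oy'(1), of r] by (simp add: algebra_simps)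
    have key: "s1^2 * (u * (1-u)) \<le> s0^2 * (v *(1-v))"
    proof -
      have "s1^2 * (u * (1-u)) = (s1^2 * s0^2) * (Gam r x y - r^2)" unfolding gu by simp
      also have "\<dots> \<le> (s1^2 * s0^2) * (Gam r x' y' - r^2)"
        using G by (intro mult_left_mono) auto
      also have "\<dots> = s0^2 * (v *(1-v))" unfolding gv by simp
      finally show ?thesis .
    qed
    have "s1* (v+3 * u-2 * u* v-2 * u^2) < s0 * (u+3* v-2 * u* v-2* v^2)"
      by (rule F_pos[OF S uv key])
    thus ?thesis using uv unfolding u_def v_def by auto
  qed
  have sm: "strict_mono_on {bl..bu} (Gf a b s0 s1)"
    unfolding Gf_def by (rule G_strict_mono) (use cond in auto)
  have ssf: "(\<lambda>\<rho>. sample_size z\<alpha> z\<beta> (p1, p2) (d1, d2) \<rho>) = (\<lambda>r. C * Gf a b s0 s1 r)"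
    unfolding ss_eq C_def a_def b_def s0_def s1_def by simp
  have sm2: "strict_mono_on {bl..bu} (\<lambda>\<rho>. sample_size z\<alpha> z\<beta> (p1, p2) (d1, d2) \<rho>)"
    unfolding ssf
  proof (rule strict_mono_onI)
    fix r t assume "r \<in> {bl..bu}" "t \<in> {bl..bu}" "r < t"
    hence "Gf a b s0 s1 r < Gf a b s0 s1 t" using sm by (simp add: strict_mono_on_def)
    thus "C * Gf a b s0 s1 r < C * Gf a b s0 s1 t" using C by simp
  qed
  have part2: "\<forall>\<rho> \<in> {bl..bu}. sample_size z\<alpha> z\<beta> (p1, p2) (d1, d2) bl \<le> sample_size z\<alpha> z\<beta> (p1, p2) (d1, d2) \<rho>
     \<and> sample_size z\<alpha> z\<beta> (p1, p2) (d1, d2) \<rho> \<le> sample_size z\<alpha> z\<beta> (p1, p2) (d1, d2) bu"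
  proof
    fix \<rho> assume h: "\<rho> \<in> {bl..bu}"
    hence "bl \<in> {bl..bu}" "bu \<in> {bl..bu}" by auto
    thus "sample_size z\<alpha> z\<beta> (p1, p2) (d1, d2) bl \<le> sample_size z\<alpha> z\<beta> (p1, p2) (d1, d2) \<rho>
     \<and> sample_size z\<alpha> z\<beta> (p1, p2) (d1, d2) \<rho> \<le> sample_size z\<alpha> z\<beta> (p1, p2) (d1, d2) bu"
      using strict_mono_on_leD[OF sm2] h by auto
  qed
  show ?thesis using sm2 part2 unfolding bl_def bu_def by simp
qed

end
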